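(* Let $U\in\Omega$, $\alpha>0$, and suppose $\langle\nabla f(U),U\rangle<0$. Then $$\Pi_\Omega(U-\alpha\nabla f(U))=\Pi_{\mathcal C(\Omega)}(U-\alpha\nabla f(U)),$$ where $\mathcal C(\Omega)$ is the convex hull of $\Omega$.
   Context: $A\in\mathbb R^{n\times n}$ symmetric, $y\in\mathbb R^n$, $L\in\mathbb R$, $\beta>0$, integers $r,K\ge1$. $f(U)=\langle L I_n+A,UU^T\rangle+\langle y,UU^T\mathbf 1_n-\mathbf 1_n\rangle+\frac\beta2\|UU^T\mathbf 1_n-\mathbf 1_n\|_2^2$ for $U\in\mathbb R^{n\times r}$. $\Omega=\{U\in\mathbb R^{n\times r}:\|U\|_F^2=K,\ U\ge0\text{ entrywise}\}$. $\Pi_S$ denotes Euclidean (Frobenius) projection onto a set $S$; in particular $\Pi_\Omega(V)=\sqrt K(V)_+/\|(V)_+\|_F$ with $(V)_+=\max\{V,0\}$ entrywise. *)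

theory Defs
  imports "HOL-Analysis.Analysis"
begin

text \<open>Matrices in R^(n x r) are modelled as real^'r^'n (rows indexed by 'n).
  The inner product and norm on this type are the Frobenius ones.\<close>

definition ones :: "real^'n" where
  "ones = (\<chi> i. 1)"

definition fobj :: "real \<Rightarrow> real^'n^'n \<Rightarrow> real^'n \<Rightarrow> real \<Rightarrow> real^'r^'n \<Rightarrow> real" where
  "fobj L A y \<beta> U =
     (L *\<^sub>R mat 1 + A) \<bullet> (U ** transpose U)
     + y \<bullet> ((U ** transpose U) *v ones - ones)
     + \<beta> / 2 * (norm ((U ** transpose U) *v ones - ones))^2"

definition Omega :: "nat \<Rightarrow> (real^'r^'n) set" where
  "Omega K = {U. (norm U)^2 = real K \<and> (\<forall>i j. U $ i $ j \<ge> 0)}"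

definition grad :: "('a::real_inner \<Rightarrow> real) \<Rightarrow> 'a \<Rightarrow> 'a" where
  "grad F x = (THE g. (F has_derivative (\<lambda>h. g \<bullet> h)) (at x))"

end

theory Submission
  imports Defs
begin

lemma inner_mono_entry:
  fixes a b c d :: "real^'r^'n"
  assumes "\<And>i j. a$i$j * b$i$j \<le> c$i$j * d$i$j"
  shows "a \<bullet> b \<le> c \<bullet> d"
  unfolding inner_vec_def
  by (intro sum_mono) (simp add: inner_vec_def sum_mono assms)

lemma closest_point_unique_char:
  fixes S :: "('a::{real_inner,heine_borel}) set"
  assumes "p \<in> S" "\<And>c. c \<in> S \<Longrightarrow> c \<noteq> p \<Longrightarrow> dist v p < dist v c"
  shows "closest_point S v = p"
  unfolding closest_point_def
proof (rule some_equality)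
  show "p \<in> S \<and> (\<forall>y\<in>S. dist v p \<le> dist v y)"
    using assms by (metis less_imp_le order_refl)
next
  fix x assume "x \<in> S \<and> (\<forall>y\<in>S. dist v x \<le> dist v y)"
  then show "x = p" using assms by (meson not_le)
qed

lemma main:
  fixes U G :: "real^'r^'n" and \<alpha> :: real
  assumes U: "U \<in> Omega K" and a: "\<alpha> > 0" and gu: "G \<bullet> U < 0"
  shows "closest_point (Omega K) (U - \<alpha> *\<^sub>R G)
       = closest_point (convex hull (Omega K)) (U - \<alpha> *\<^sub>R G)"
proof -
  define V where "V = U - \<alpha> *\<^sub>R G"
  define P :: "real^'r^'n" where "P = (\<chi> i. \<chi> j. max (V$i$j) 0)"
  define t where "t = norm P"
  define s where "s = sqrt (real K)"
  define p where "p = (s / t) *\<^sub>R P"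
  have Uuu: "U \<bullet> U = real K" using U unfolding Omega_def by (simp add: power2_norm_eq_inner)
  have U0: "\<And>i j. U$i$j \<ge> 0" using U unfolding Omega_def by auto
  have normU: "norm U = s" unfolding s_def norm_eq_sqrt_inner Uuu ..
  have VU: "V \<bullet> U > real K" unfolding V_def using a gu Uuu
    by (simp add: inner_diff_left mult_pos_neg)
  have PU: "V \<bullet> U \<le> P \<bullet> U"
    by (rule inner_mono_entry) (simp add: P_def U0 mult_right_mono)
  have CS: "P \<bullet> U \<le> t * s" using norm_cauchy_schwarz[of P U] normU t_def by simp
  have Kpos: "real K > 0"
  proof (rule ccontr)
    assume "\<not> real K > 0"
    then have "K = 0" by simp
    then have "U = 0" using Uuu by simp
    then show False using gu by simp
  qed
  have s0: "s > 0" unfolding s_def using Kpos by simp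
  have ss: "s * s = real K" unfolding s_def using Kpos by simp
  have ts: "t * s > s * s" using VU PU CS ss by linarith
  then have tgs: "t > s" using s0 by simp
  then have t0: "t > 0" using s0 by simp
  have VP: "V \<bullet> P = P \<bullet> P"
    by (rule antisym; rule inner_mono_entry; simp add: P_def max_def)
  have PP: "P \<bullet> P = t * t" unfolding t_def by (simp add: power2_norm_eq_inner[symmetric] power2_eq_square)
  have normp: "norm p = s" unfolding p_def using t0 s0 t_def by simp
  have pOm: "p \<in> Omega K"
    unfolding Omega_def using normp ss t0 s0
    by (auto simp: p_def P_def power2_eq_square)
  have key: "(V - p) \<bullet> (c - p) \<le> 0" if c: "c \<in> Omega K" for c
  proof -
    have c0: "\<And>i j. c$i$j \<ge> 0" using c unfolding Omega_def by auto
    have normc: "norm c = s" using c unfolding Omega_def s_def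
      using real_sqrt_unique[of "norm c" "real K"] by simp
    have Vc: "V \<bullet> c \<le> P \<bullet> c"
      by (rule inner_mono_entry) (simp add: P_def c0 mult_right_mono)
    have Pc: "P \<bullet> c \<le> t * s" using norm_cauchy_schwarz[of P c] normc t_def by simp
    have Vp: "V \<bullet> p = s * t" unfolding p_def using VP PP t0 by simp
    have pp: "p \<bullet> p = s * s" using normp by (simp add: power2_norm_eq_inner[symmetric] power2_eq_square)
    have pc: "p \<bullet> c = (s / t) * (P \<bullet> c)" unfolding p_def by simp
    have co: "1 - s / t \<ge> 0" using tgs t0 by simp
    have "(V - p) \<bullet> (c - p) = V \<bullet> c - V \<bullet> p - p \<bullet> c + p \<bullet> p"
      by (simp add: inner_diff_left inner_diff_right inner_commute)
    also have "\<dots> \<le> (P \<bullet> c) * (1 - s / t) - s * t + s * s"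
      using Vc Vp pp pc right_diff_distrib[of "P \<bullet> c" 1 "s / t"] by (simp add: mult.commute)
    also have "\<dots> \<le> (t * s) * (1 - s / t) - s * t + s * s"
      using mult_right_mono[OF Pc co] by simp
    also have "\<dots> = 0" using t0 by (simp add: field_simps)
    finally show ?thesis .
  qed
  have hull: "convex hull (Omega K) \<subseteq> {c. (V - p) \<bullet> c \<le> (V - p) \<bullet> p}"
    by (rule hull_minimal) (use key in \<open>auto simp: convex_halfspace_le inner_diff_right\<close>)
  have strict: "dist V p < dist V c" if "c \<in> convex hull (Omega K)" "c \<noteq> p" for c
  proof -
    have h: "(V - p) \<bullet> (c - p) \<le> 0" using hull that by (auto simp: inner_diff_right)
    have e: "(V - p) - (c - p) = V - c" by simp
    have eq: "(V - p) \<bullet> (c - p) = ((norm (V - p))\<^sup>2 + (norm (c - p))\<^sup>2 - (norm (V - c))\<^sup>2) / 2"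
      using dot_norm_neg[of "V - p" "c - p"] unfolding e .
    have "norm (c - p) > 0" using that by simp
    then have "(norm (c - p))\<^sup>2 > 0" by simp
    moreover have "2 * ((V - p) \<bullet> (c - p)) = (norm (V - p))\<^sup>2 + (norm (c - p))\<^sup>2 - (norm (V - c))\<^sup>2"
      using eq by simp
    ultimately have "(norm (V - c))\<^sup>2 > (norm (V - p))\<^sup>2" using h by linarith
    then have "(dist V c)^2 > (dist V p)^2" by (simp add: dist_norm)
    then show ?thesis using power_less_imp_less_base[of "dist V p" 2 "dist V c"] by simp
  qed
  have pC: "p \<in> convex hull (Omega K)" using pOm hull_subset[of "Omega K" convex] by blast
  have "closest_point (Omega K) V = p"
    by (rule closest_point_unique_char[OF pOm]) (use strict hull_subset[of "Omega K" convex] in blast)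
  moreover have "closest_point (convex hull (Omega K)) V = p"
    by (rule closest_point_unique_char[OF pC strict])
  ultimately show ?thesis unfolding V_def by simp
qed

theorem lemma19:
  fixes A :: "real^'n^'n" and y :: "real^'n" and L \<beta> \<alpha> :: real
    and K :: nat and U :: "real^'r^'n"
  assumes "transpose A = A" and "\<beta> > 0" and "K \<ge> 1"
    and "U \<in> Omega K" and "\<alpha> > 0"
    and "grad (fobj L A y \<beta>) U \<bullet> U < 0"
  shows "closest_point (Omega K) (U - \<alpha> *\<^sub>R grad (fobj L A y \<beta>) U)
       = closest_point (convex hull (Omega K)) (U - \<alpha> *\<^sub>R grad (fobj L A y \<beta>) U)"
  by (rule main) (use assms in auto)

end
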